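(* Let $a\ge b\ge k$ be positive integers. Then, as elements of $\operatorname{Hom}_G(\Lambda^a\otimes\Lambda^b,\Lambda^a\otimes\Lambda^b)$, \[\phi_k=\sum_{t=0}^{k}(-1)^t\binom{b-t}{k-t}\Phi_t\qquad\text{and}\qquad\psi_k=\sum_{t=1}^{k}(-1)^{t-1}\binom{b-t}{k-t}\Phi_t.\]
   Context: $K$ is a field of characteristic zero, $G=GL(n,K)$, $V=K^n$, $\Lambda=\bigoplus_i\Lambda^i$ the exterior algebra of $V$. $m$ is multiplication and $\Delta_{s,t}:\Lambda^{s+t}\to\Lambda^s\otimes\Lambda^t$ the comultiplication component $v_1\cdots v_{s+t}\mapsto\sum_\sigma\mathrm{sgn}(\sigma)v_{\sigma(1)}\cdots v_{\sigma(s)}\otimes v_{\sigma(s+1)}\cdots v_{\sigma(s+t)}$ (permutations increasing on the first $s$ and last $t$ positions). For $0\le t\le b$: $\delta_t=(m\otimes1)\circ(1\otimes\Delta_{t,b-t}):\Lambda^a\otimes\Lambda^b\to\Lambda^{a+t}\otimes\Lambda^{b-t}$, $\theta_t=(1\otimes m)\circ(\Delta_{a,t}\otimes1):\Lambda^{a+t}\otimes\Lambda^{b-t}\to\Lambda^a\otimes\Lambda^b$, $\Phi_t=\theta_t\circ\delta_t$. $\phi_k$ is the composition $(m\otimes m)\circ(1\otimes\tau\otimes1)\circ(\Delta_{a-k,k}\otimes\Delta_{k,b-k}):\Lambda^a\otimes\Lambda^b\to\Lambda^a\otimes\Lambda^b$, where $\tau:\Lambda^k\otimes\Lambda^k\to\Lambda^k\otimes\Lambda^k$,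 $w\otimes z\mapsto z\otimes w$; and $\psi_k=\binom{b}{k}1_{\Lambda^a\otimes\Lambda^b}-\phi_k$. *)

theory Defs
  imports Main
begin

text \<open>Exterior algebra of V = K^n with standard basis e_0,...,e_(n-1).
  A basis of the exterior algebra is e_S = e_(s1) ... e_(sr) (s1 < ... < sr) for S a subset of {..<n}.
  Elements of Lambda are coefficient functions  nat set => 'a, elements of Lambda (x) Lambda are
  curried coefficient functions nat set => nat set => 'a, and so on for higher tensor powers.\<close>

text \<open>Sign of e_S e_T = wsgn S T * e_(S union T).\<close>
definition wsgn :: "nat set \<Rightarrow> nat set \<Rightarrow> 'a::field" where
  "wsgn S T = (if S \<inter> T = {} then (-1) ^ card {(i, j). i \<in> S \<and> j \<in> T \<and> j < i} else 0)"

definition mult :: "nat \<Rightarrow> (nat set \<Rightarrow> nat set \<Rightarrow> 'a::field) \<Rightarrow> nat set \<Rightarrow> 'a" where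
  "mult n z U = (\<Sum>S\<in>Pow {..<n}. \<Sum>T\<in>Pow {..<n}.
                   (if S \<union> T = U then wsgn S T * z S T else 0))"

definition comult :: "nat \<Rightarrow> nat \<Rightarrow> nat \<Rightarrow> (nat set \<Rightarrow> 'a::field) \<Rightarrow> nat set \<Rightarrow> nat set \<Rightarrow> 'a" where
  "comult n s t v S T = (if card S = s \<and> card T = t then wsgn S T * v (S \<union> T) else 0)"

text \<open>delta_t = (m (x) 1) o (1 (x) Delta_(t,b-t)).\<close>
definition delta :: "nat \<Rightarrow> nat \<Rightarrow> nat \<Rightarrow> nat \<Rightarrow> (nat set \<Rightarrow> nat set \<Rightarrow> 'a::field) \<Rightarrow> nat set \<Rightarrow> nat set \<Rightarrow> 'a" where
  "delta n a b t x = (\<lambda>U W. mult n (\<lambda>S A. comult n t (b - t) (x S) A W) U)"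

text \<open>theta_t = (1 (x) m) o (Delta_(a,t) (x) 1).\<close>
definition theta :: "nat \<Rightarrow> nat \<Rightarrow> nat \<Rightarrow> nat \<Rightarrow> (nat set \<Rightarrow> nat set \<Rightarrow> 'a::field) \<Rightarrow> nat set \<Rightarrow> nat set \<Rightarrow> 'a" where
  "theta n a b t y = (\<lambda>S V. mult n (\<lambda>A W. comult n a t (\<lambda>U. y U W) S A) V)"

definition Phi :: "nat \<Rightarrow> nat \<Rightarrow> nat \<Rightarrow> nat \<Rightarrow> (nat set \<Rightarrow> nat set \<Rightarrow> 'a::field) \<Rightarrow> nat set \<Rightarrow> nat set \<Rightarrow> 'a" where
  "Phi n a b t x = theta n a b t (delta n a b t x)"

text \<open>phi_k = (m (x) m) o (1 (x) tau (x) 1) o (Delta_(a-k,k) (x) Delta_(k,b-k)).\<close>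
definition phi :: "nat \<Rightarrow> nat \<Rightarrow> nat \<Rightarrow> nat \<Rightarrow> (nat set \<Rightarrow> nat set \<Rightarrow> 'a::field) \<Rightarrow> nat set \<Rightarrow> nat set \<Rightarrow> 'a" where
  "phi n a b k x = (\<lambda>U V.
     mult n (\<lambda>S1 A. mult n (\<lambda>S2 B.
        comult n (a - k) k (\<lambda>S. comult n k (b - k) (x S) A B) S1 S2) V) U)"

definition psi :: "nat \<Rightarrow> nat \<Rightarrow> nat \<Rightarrow> nat \<Rightarrow> (nat set \<Rightarrow> nat set \<Rightarrow> 'a::field) \<Rightarrow> nat set \<Rightarrow> nat set \<Rightarrow> 'a" where
  "psi n a b k x = (\<lambda>U V. of_nat (b choose k) * x U V - phi n a b k x U V)"

definition in_tensor :: "nat \<Rightarrow> nat \<Rightarrow> nat \<Rightarrow> (nat set \<Rightarrow> nat set \<Rightarrow> 'a::zero) \<Rightarrow> bool" where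
  "in_tensor n a b x \<longleftrightarrow> (\<forall>S T. x S T \<noteq> 0 \<longrightarrow>
      S \<subseteq> {..<n} \<and> T \<subseteq> {..<n} \<and> card S = a \<and> card T = b)"

end

theory Submission
  imports Defs
begin

definition ninv :: "nat set \<Rightarrow> nat set \<Rightarrow> nat" where
  "ninv S T = card {(i, j). i \<in> S \<and> j \<in> T \<and> j < i}"

lemma wsgn_eq: "wsgn S T = (if S \<inter> T = {} then (-1) ^ ninv S T else 0)"
  by (simp add: wsgn_def ninv_def)

lemma ninv_empty[simp]: "ninv {} B = 0" "ninv A {} = 0"
  by (simp_all add: ninv_def)

lemma ninv_Un_left:
  assumes "finite A" "finite B" "finite C" "A \<inter> B = {}"
  shows "ninv (A \<union> B) C = ninv A C + ninv B C"
proof -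
  have e: "{(i, j). i \<in> A \<union> B \<and> j \<in> C \<and> j < i} =
     {(i, j). i \<in> A \<and> j \<in> C \<and> j < i} \<union> {(i, j). i \<in> B \<and> j \<in> C \<and> j < i}" by blast
  have f1: "finite {(i, j). i \<in> A \<and> j \<in> C \<and> j < i}"
    by (rule finite_subset[of _ "A \<times> C"]) (use assms in auto)
  have f2: "finite {(i, j). i \<in> B \<and> j \<in> C \<and> j < i}"
    by (rule finite_subset[of _ "B \<times> C"]) (use assms in auto)
  show ?thesis unfolding ninv_def e
    by (rule card_Un_disjoint[OF f1 f2]) (use assms in blast)
qed

lemma ninv_Un_right:
  assumes "finite A" "finite B" "finite C" "B \<inter> C = {}"
  shows "ninv A (B \<union> C) = ninv A B + ninv A C"
proof -
  have e: "{(i, j). i \<in> A \<and> j \<in> B \<union> C \<and> j < i} =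
     {(i, j). i \<in> A \<and> j \<in> B \<and> j < i} \<union> {(i, j). i \<in> A \<and> j \<in> C \<and> j < i}" by blast
  have f1: "finite {(i, j). i \<in> A \<and> j \<in> B \<and> j < i}"
    by (rule finite_subset[of _ "A \<times> B"]) (use assms in auto)
  have f2: "finite {(i, j). i \<in> A \<and> j \<in> C \<and> j < i}"
    by (rule finite_subset[of _ "A \<times> C"]) (use assms in auto)
  show ?thesis unfolding ninv_def e
    by (rule card_Un_disjoint[OF f1 f2]) (use assms in blast)
qed

lemma ninv_swap:
  assumes "finite A" "finite B" "A \<inter> B = {}"
  shows "ninv A B + ninv B A = card A * card B"
proof -
  let ?X = "{(i, j). i \<in> A \<and> j \<in> B \<and> j < i}"
  let ?Y = "{(i, j). i \<in> A \<and> j \<in> B \<and> i < j}"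
  have im: "prod.swap ` {(i, j). i \<in> B \<and> j \<in> A \<and> j < i} = ?Y"
  proof (rule set_eqI)
    fix p :: "nat \<times> nat"
    show "p \<in> prod.swap ` {(i, j). i \<in> B \<and> j \<in> A \<and> j < i} \<longleftrightarrow> p \<in> ?Y"
      by (cases p) (auto simp: image_iff)
  qed
  have cY: "ninv B A = card ?Y" unfolding ninv_def im[symmetric]
    by (rule card_image[symmetric]) (auto simp: inj_on_def)
  have fX: "finite ?X" by (rule finite_subset[of _ "A \<times> B"]) (use assms in auto)
  have fY: "finite ?Y" by (rule finite_subset[of _ "A \<times> B"]) (use assms in auto)
  have "?X \<union> ?Y = A \<times> B" using assms(3) by auto
  moreover have "card (?X \<union> ?Y) = card ?X + card ?Y"
    by (rule card_Un_disjoint[OF fX fY]) auto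
  ultimately show ?thesis using cY by (simp add: ninv_def card_cartesian_product)
qed

lemma phi_exp:
  assumes f: "finite R" "finite X" "finite Y" "finite Q" "finite Z0" "finite Z1"
    and d: "R \<inter> X = {}" "R \<inter> Y = {}" "R \<inter> Q = {}" "R \<inter> Z0 = {}" "R \<inter> Z1 = {}"
      "X \<inter> Y = {}" "X \<inter> Q = {}" "X \<inter> Z0 = {}" "X \<inter> Z1 = {}"
      "Y \<inter> Q = {}" "Y \<inter> Z0 = {}" "Y \<inter> Z1 = {}"
      "Q \<inter> Z0 = {}" "Q \<inter> Z1 = {}" "Z0 \<inter> Z1 = {}"
    and c: "card X = card Y"
  shows "ninv (R \<union> Z0) (Y \<union> Z1) + ninv (X \<union> Z1) (Q \<union> Z0) + ninv (R \<union> Z0) (X \<union> Z1)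
     + ninv (Y \<union> Z1) (Q \<union> Z0) = (ninv R Y + ninv X Q + ninv R X + ninv Y Q)
     + 2 * (ninv R Z1 + ninv Z0 Z1 + ninv Z1 Q + ninv Z1 Z0 + card X * card Z0)"
proof -
  have s1: "ninv Z0 Y + ninv Y Z0 = card X * card Z0" using ninv_swap f d c by (simp add: Int_commute mult.commute)
  have s2: "ninv X Z0 + ninv Z0 X = card X * card Z0" using ninv_swap f d by (simp add: Int_commute)
  show ?thesis using f d s1 s2
    by (simp add: ninv_Un_left ninv_Un_right Int_Un_distrib Int_Un_distrib2 Int_commute)
qed

lemma Phi_exp:
  assumes f: "finite R" "finite X" "finite Y" "finite Q0" "finite Q1" "finite Z"
    and d: "R \<inter> X = {}" "R \<inter> Y = {}" "R \<inter> Q0 = {}" "R \<inter> Q1 = {}" "R \<inter> Z = {}"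
      "X \<inter> Y = {}" "X \<inter> Q0 = {}" "X \<inter> Q1 = {}" "X \<inter> Z = {}"
      "Y \<inter> Q0 = {}" "Y \<inter> Q1 = {}" "Y \<inter> Z = {}"
      "Q0 \<inter> Q1 = {}" "Q0 \<inter> Z = {}" "Q1 \<inter> Z = {}"
    and c: "card X = card Y"
  shows "ninv (X \<union> Q1) (Q0 \<union> Z) + ninv (R \<union> Y \<union> Z) (X \<union> Q1) + ninv (R \<union> X \<union> Z) (Y \<union> Q1)
     + ninv (Y \<union> Q1) (Q0 \<union> Z) = (ninv R Y + ninv X (Q0 \<union> Q1) + ninv R X + ninv Y (Q0 \<union> Q1))
     + card X * card X + 2 * (ninv Q1 Q0 + ninv Q1 Z + ninv R Q1 + ninv Z Q1 + card X * card Z)"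
proof -
  have s1: "ninv X Z + ninv Z X = card X * card Z" using ninv_swap f d by (simp add: Int_commute)
  have s2: "ninv Y X + ninv X Y = card X * card X" using ninv_swap f d c by (simp add: Int_commute)
  have s3: "ninv Z Y + ninv Y Z = card X * card Z" using ninv_swap f d c by (simp add: Int_commute mult.commute)
  show ?thesis using f d s1 s2 s3
    by (simp add: ninv_Un_left ninv_Un_right Int_Un_distrib Int_Un_distrib2 Int_commute)
qed

lemma binom_alt:
  "(\<Sum>s=0..K. (-1)^s * of_nat (q choose s) * of_nat ((q+z-s) choose (K-s)) :: 'a::comm_ring_1)
     = of_nat (z choose K)"
proof (induction q arbitrary: z K)
  case 0
  have "(\<Sum>s=0..K. (-1)^s * of_nat (0 choose s) * of_nat ((0+z-s) choose (K-s)) :: 'a)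
      = (\<Sum>s=0..K. if s = 0 then of_nat (z choose K) else 0)"
    by (rule sum.cong) (auto simp: binomial_eq_0)
  then show ?case by simp
next
  case (Suc q)
  show ?case
  proof (cases K)
    case 0
    then show ?thesis by simp
  next
    case (Suc K')
    let ?f = "\<lambda>s. (-1)^s * of_nat (Suc q choose s) * of_nat ((Suc q+z-s) choose (K-s)) :: 'a"
    have A: "(\<Sum>s=0..K. ?f s) = ?f 0 + (\<Sum>s=0..K'. ?f (Suc s))"
      unfolding Suc sum.atLeast0_atMost_Suc_shift comp_def by (rule refl)
    have B: "?f (Suc s) = - ((-1)^s * of_nat (q choose s) * of_nat ((q+z-s) choose (K'-s)))
        - ((-1)^s * of_nat (q choose Suc s) * of_nat ((q+z-s) choose (K'-s)))" for s
      using Suc by (simp add: algebra_simps)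
    have IH1: "(\<Sum>s=0..K. (-1)^s * of_nat (q choose s) * of_nat ((q+Suc z-s) choose (K-s)) :: 'a)
       = of_nat (Suc z choose K)" by (rule Suc.IH)
    have IH2: "(\<Sum>s=0..K'. (-1)^s * of_nat (q choose s) * of_nat ((q+z-s) choose (K'-s)) :: 'a)
       = of_nat (z choose K')" by (rule Suc.IH)
    have C: "(\<Sum>s=0..K. (-1)^s * of_nat (q choose s) * of_nat ((q+Suc z-s) choose (K-s)) :: 'a)
       = of_nat ((q + Suc z) choose K) + (\<Sum>s=0..K'. - ((-1)^s * of_nat (q choose Suc s) * of_nat ((q+z-s) choose (K'-s))))"
      unfolding Suc sum.atLeast0_atMost_Suc_shift comp_def by simp
    have "(\<Sum>s=0..K. ?f s) = of_nat ((q + Suc z) choose K) - (\<Sum>s=0..K'. (-1)^s * of_nat (q choose s) * of_nat ((q+z-s) choose (K'-s)))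
       + (\<Sum>s=0..K'. - ((-1)^s * of_nat (q choose Suc s) * of_nat ((q+z-s) choose (K'-s))))"
      unfolding A B by (simp add: sum.distrib sum_subtractf sum_negf)
    also have "\<dots> = of_nat (Suc z choose K) - of_nat (z choose K')"
      using IH1 IH2 C by (simp add: algebra_simps)
    also have "\<dots> = of_nat (z choose K)" unfolding Suc by simp
    finally show ?thesis .
  qed
qed

lemma move4:
  "(\<Sum>s\<in>M. \<Sum>i\<in>I. \<Sum>j\<in>J. \<Sum>k\<in>K. \<Sum>l\<in>L. h s i j k l) =
   (\<Sum>i\<in>I. \<Sum>j\<in>J. \<Sum>k\<in>K. \<Sum>l\<in>L. \<Sum>s\<in>M. h s i j k l)"
proof -
  have "(\<Sum>s\<in>M. \<Sum>i\<in>I. \<Sum>j\<in>J. \<Sum>k\<in>K. \<Sum>l\<in>L. h s i j k l) =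
        (\<Sum>i\<in>I. \<Sum>s\<in>M. \<Sum>j\<in>J. \<Sum>k\<in>K. \<Sum>l\<in>L. h s i j k l)" by (rule sum.swap)
  also have "\<dots> = (\<Sum>i\<in>I. \<Sum>j\<in>J. \<Sum>s\<in>M. \<Sum>k\<in>K. \<Sum>l\<in>L. h s i j k l)"
    by (rule sum.cong[OF refl], rule sum.swap)
  also have "\<dots> = (\<Sum>i\<in>I. \<Sum>j\<in>J. \<Sum>k\<in>K. \<Sum>s\<in>M. \<Sum>l\<in>L. h s i j k l)"
    by (rule sum.cong[OF refl], rule sum.cong[OF refl], rule sum.swap)
  also have "\<dots> = (\<Sum>i\<in>I. \<Sum>j\<in>J. \<Sum>k\<in>K. \<Sum>l\<in>L. \<Sum>s\<in>M. h s i j k l)"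
    by (rule sum.cong[OF refl], rule sum.cong[OF refl], rule sum.cong[OF refl], rule sum.swap)
  finally show ?thesis .
qed

lemma move3:
  "(\<Sum>s\<in>M. \<Sum>i\<in>I. \<Sum>j\<in>J. \<Sum>k\<in>K. h s i j k) =
   (\<Sum>i\<in>I. \<Sum>j\<in>J. \<Sum>k\<in>K. \<Sum>s\<in>M. h s i j k)"
proof -
  have "(\<Sum>s\<in>M. \<Sum>i\<in>I. \<Sum>j\<in>J. \<Sum>k\<in>K. h s i j k) =
        (\<Sum>i\<in>I. \<Sum>s\<in>M. \<Sum>j\<in>J. \<Sum>k\<in>K. h s i j k)" by (rule sum.swap)
  also have "\<dots> = (\<Sum>i\<in>I. \<Sum>j\<in>J. \<Sum>s\<in>M. \<Sum>k\<in>K. h s i j k)"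
    by (rule sum.cong[OF refl], rule sum.swap)
  also have "\<dots> = (\<Sum>i\<in>I. \<Sum>j\<in>J. \<Sum>k\<in>K. \<Sum>s\<in>M. h s i j k)"
    by (rule sum.cong[OF refl], rule sum.cong[OF refl], rule sum.swap)
  finally show ?thesis .
qed

lemma swap6:
  "(\<Sum>s\<in>M. \<Sum>t\<in>N. \<Sum>i\<in>I. \<Sum>j\<in>J. \<Sum>k\<in>K. \<Sum>l\<in>L. f s t i j k l) =
   (\<Sum>i\<in>I. \<Sum>j\<in>J. \<Sum>k\<in>K. \<Sum>l\<in>L. \<Sum>s\<in>M. \<Sum>t\<in>N. f s t i j k l)"
proof -
  have "(\<Sum>s\<in>M. \<Sum>t\<in>N. \<Sum>i\<in>I. \<Sum>j\<in>J. \<Sum>k\<in>K. \<Sum>l\<in>L. f s t i j k l) =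
        (\<Sum>s\<in>M. \<Sum>i\<in>I. \<Sum>j\<in>J. \<Sum>k\<in>K. \<Sum>l\<in>L. \<Sum>t\<in>N. f s t i j k l)"
    by (rule sum.cong[OF refl], rule move4)
  also have "\<dots> = (\<Sum>i\<in>I. \<Sum>j\<in>J. \<Sum>k\<in>K. \<Sum>l\<in>L. \<Sum>s\<in>M. \<Sum>t\<in>N. f s t i j k l)"
    by (rule move4)
  finally show ?thesis .
qed

lemma swap5:
  "(\<Sum>s\<in>M. \<Sum>t\<in>N. \<Sum>i\<in>I. \<Sum>j\<in>J. \<Sum>k\<in>K. f s t i j k) =
   (\<Sum>i\<in>I. \<Sum>j\<in>J. \<Sum>k\<in>K. \<Sum>s\<in>M. \<Sum>t\<in>N. f s t i j k)"
proof -
  have "(\<Sum>s\<in>M. \<Sum>t\<in>N. \<Sum>i\<in>I. \<Sum>j\<in>J. \<Sum>k\<in>K. f s t i j k) =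
        (\<Sum>s\<in>M. \<Sum>i\<in>I. \<Sum>j\<in>J. \<Sum>k\<in>K. \<Sum>t\<in>N. f s t i j k)"
    by (rule sum.cong[OF refl], rule move3)
  also have "\<dots> = (\<Sum>i\<in>I. \<Sum>j\<in>J. \<Sum>k\<in>K. \<Sum>s\<in>M. \<Sum>t\<in>N. f s t i j k)"
    by (rule move3)
  finally show ?thesis .
qed

lemma delta2:
  assumes "finite M" "finite N" "s \<in> M" "t \<in> N"
  shows "(\<Sum>S\<in>M. \<Sum>T\<in>N. if c \<and> s = S \<and> t = T then f S T else 0) = (if c then f s t else 0)"
proof -
  have "(\<Sum>S\<in>M. \<Sum>T\<in>N. if c \<and> s = S \<and> t = T then f S T else 0)
     = (\<Sum>S\<in>M. if s = S then (\<Sum>T\<in>N. if t = T then (if c then f S T else 0) else 0) else 0)"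
    by (intro sum.cong refl) (auto intro!: sum.cong)
  then show ?thesis using assms by (simp add: sum.delta')
qed

definition cphi :: "nat \<Rightarrow> nat \<Rightarrow> nat \<Rightarrow> nat \<Rightarrow> nat set \<Rightarrow> nat set \<Rightarrow> nat set \<Rightarrow> nat set \<Rightarrow> 'a::field" where
  "cphi n a b k S T U V = (\<Sum>S1\<in>Pow {..<n}. \<Sum>A\<in>Pow {..<n}. \<Sum>S2\<in>Pow {..<n}. \<Sum>B\<in>Pow {..<n}.
     if S1 \<union> A = U \<and> S2 \<union> B = V \<and> card S1 = a - k \<and> card S2 = k \<and> card A = k \<and> card B = b - k
        \<and> S1 \<union> S2 = S \<and> A \<union> B = T
     then wsgn S1 A * wsgn S2 B * wsgn S1 S2 * wsgn A B else 0)"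

lemma phi_expand:
  "phi n a b k x U V = (\<Sum>S\<in>Pow {..<n}. \<Sum>T\<in>Pow {..<n}. x S T * cphi n a b k S T U V)"
proof -
  let ?P = "Pow {..<n}"
  let ?c = "\<lambda>S1 A S2 B. S1 \<union> A = U \<and> S2 \<union> B = V \<and> card S1 = a - k \<and> card S2 = k \<and> card A = k \<and> card B = b - k"
  let ?g = "\<lambda>S1 A S2 B. wsgn S1 A * wsgn S2 B * wsgn S1 S2 * wsgn A B"
  have 1: "phi n a b k x U V = (\<Sum>S1\<in>?P. \<Sum>A\<in>?P. \<Sum>S2\<in>?P. \<Sum>B\<in>?P.
      if ?c S1 A S2 B then ?g S1 A S2 B * x (S1 \<union> S2) (A \<union> B) else 0)"
    unfolding phi_def mult_def comult_def
    by (auto simp: sum_distrib_left intro!: sum.cong)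
  have 2: "(\<Sum>S\<in>?P. \<Sum>T\<in>?P. x S T * cphi n a b k S T U V) =
     (\<Sum>S\<in>?P. \<Sum>T\<in>?P. \<Sum>S1\<in>?P. \<Sum>A\<in>?P. \<Sum>S2\<in>?P. \<Sum>B\<in>?P.
       if ?c S1 A S2 B \<and> S1 \<union> S2 = S \<and> A \<union> B = T then ?g S1 A S2 B * x S T else 0)"
    unfolding cphi_def by (auto simp: sum_distrib_left intro!: sum.cong)
  also have "\<dots> = (\<Sum>S1\<in>?P. \<Sum>A\<in>?P. \<Sum>S2\<in>?P. \<Sum>B\<in>?P. \<Sum>S\<in>?P. \<Sum>T\<in>?P.
       if ?c S1 A S2 B \<and> S1 \<union> S2 = S \<and> A \<union> B = T then ?g S1 A S2 B * x S T else 0)"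
    by (rule swap6)
  also have "\<dots> = (\<Sum>S1\<in>?P. \<Sum>A\<in>?P. \<Sum>S2\<in>?P. \<Sum>B\<in>?P.
      if ?c S1 A S2 B then ?g S1 A S2 B * x (S1 \<union> S2) (A \<union> B) else 0)"
  proof (intro sum.cong refl)
    fix S1 A S2 B assume h: "S1 \<in> ?P" "A \<in> ?P" "S2 \<in> ?P" "B \<in> ?P"
    show "(\<Sum>S\<in>?P. \<Sum>T\<in>?P. if ?c S1 A S2 B \<and> S1 \<union> S2 = S \<and> A \<union> B = T then ?g S1 A S2 B * x S T else 0)
        = (if ?c S1 A S2 B then ?g S1 A S2 B * x (S1 \<union> S2) (A \<union> B) else 0)"
      by (rule delta2) (use h in auto)
  qed
  finally show ?thesis using 1 by simp
qed

lemma delta1: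
  assumes "finite N" "t \<in> N"
  shows "(\<Sum>T\<in>N. if c \<and> t = T then f T else 0) = (if c then f t else 0)"
proof -
  have "(\<Sum>T\<in>N. if c \<and> t = T then f T else 0) = (\<Sum>T\<in>N. if t = T then (if c then f T else 0) else 0)"
    by (intro sum.cong refl) auto
  then show ?thesis using assms by (simp add: sum.delta')
qed

definition cPhi :: "nat \<Rightarrow> nat \<Rightarrow> nat \<Rightarrow> nat \<Rightarrow> nat set \<Rightarrow> nat set \<Rightarrow> nat set \<Rightarrow> nat set \<Rightarrow> 'a::field" where
  "cPhi n a b t S T U V = (\<Sum>A'\<in>Pow {..<n}. \<Sum>W\<in>Pow {..<n}. \<Sum>A\<in>Pow {..<n}.
     if A' \<union> W = V \<and> card U = a \<and> card A' = t \<and> S \<union> A = U \<union> A' \<and> card A = t \<and> card W = b - t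
        \<and> A \<union> W = T
     then wsgn A' W * wsgn U A' * wsgn S A * wsgn A W else 0)"

lemma Phi_expand:
  "Phi n a b t x U V = (\<Sum>S\<in>Pow {..<n}. \<Sum>T\<in>Pow {..<n}. x S T * cPhi n a b t S T U V)"
proof -
  let ?P = "Pow {..<n}"
  let ?c = "\<lambda>A' W S A. A' \<union> W = V \<and> card U = a \<and> card A' = t \<and> S \<union> A = U \<union> A' \<and> card A = t \<and> card W = b - t"
  let ?g = "\<lambda>A' W S A. wsgn A' W * wsgn U A' * wsgn S A * wsgn A W"
  have 1: "Phi n a b t x U V = (\<Sum>A'\<in>?P. \<Sum>W\<in>?P. \<Sum>S\<in>?P. \<Sum>A\<in>?P.
      if ?c A' W S A then ?g A' W S A * x S (A \<union> W) else 0)"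
    unfolding Phi_def theta_def delta_def mult_def comult_def
    by (auto simp: sum_distrib_left intro!: sum.cong)
  also have "\<dots> = (\<Sum>A'\<in>?P. \<Sum>W\<in>?P. \<Sum>A\<in>?P. \<Sum>S\<in>?P.
      if ?c A' W S A then ?g A' W S A * x S (A \<union> W) else 0)"
    by (rule sum.cong[OF refl], rule sum.cong[OF refl], rule sum.swap)
  finally have 1: "Phi n a b t x U V = \<dots>" .
  have 2: "(\<Sum>S\<in>?P. \<Sum>T\<in>?P. x S T * cPhi n a b t S T U V) =
     (\<Sum>S\<in>?P. \<Sum>T\<in>?P. \<Sum>A'\<in>?P. \<Sum>W\<in>?P. \<Sum>A\<in>?P.
       if ?c A' W S A \<and> A \<union> W = T then ?g A' W S A * x S T else 0)"
    unfolding cPhi_def by (auto simp: sum_distrib_left intro!: sum.cong)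
  also have "\<dots> = (\<Sum>A'\<in>?P. \<Sum>W\<in>?P. \<Sum>A\<in>?P. \<Sum>S\<in>?P. \<Sum>T\<in>?P.
       if ?c A' W S A \<and> A \<union> W = T then ?g A' W S A * x S T else 0)"
    by (rule swap5)
  also have "\<dots> = (\<Sum>A'\<in>?P. \<Sum>W\<in>?P. \<Sum>A\<in>?P. \<Sum>S\<in>?P.
      if ?c A' W S A then ?g A' W S A * x S (A \<union> W) else 0)"
  proof (intro sum.cong refl)
    fix A' W A S assume h: "A' \<in> ?P" "W \<in> ?P" "A \<in> ?P" "S \<in> ?P"
    show "(\<Sum>T\<in>?P. if ?c A' W S A \<and> A \<union> W = T then ?g A' W S A * x S T else 0)
        = (if ?c A' W S A then ?g A' W S A * x S (A \<union> W) else 0)"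
      by (rule delta1) (use h in auto)
  qed
  finally show ?thesis using 1 by simp
qed

definition valid :: "nat \<Rightarrow> nat \<Rightarrow> nat set \<Rightarrow> nat set \<Rightarrow> nat set \<Rightarrow> nat set \<Rightarrow> bool" where
  "valid a b S T U V \<longleftrightarrow> S \<union> T = U \<union> V \<and> S \<inter> T = U \<inter> V \<and> card U = a \<and> card V = b"

definition epsv :: "nat set \<Rightarrow> nat set \<Rightarrow> nat set \<Rightarrow> nat set \<Rightarrow> 'a::field" where
  "epsv S T U V = (-1) ^ (ninv (S - V) (T - V) + ninv (S - U) (T - U) + ninv (S - V) (S - U) + ninv (T - V) (T - U))"

lemma valid_facts:
  assumes v: "valid a b S T U V" and f: "finite S" "finite T" and c: "card S = a" "card T = b"
  shows "S = (S - V) \<union> (S - U) \<union> (S \<inter> T)" "U = (S - V) \<union> (T - V) \<union> (S \<inter> T)"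
    "T = (T - V) \<union> (T - U) \<union> (S \<inter> T)" "V = (S - U) \<union> (T - U) \<union> (S \<inter> T)"
    "card (S - U) = card (T - V)"
    "a = card (S - V) + card (S - U) + card (S \<inter> T)"
    "b = card (T - V) + card (T - U) + card (S \<inter> T)"
proof -
  have e1: "S \<union> T = U \<union> V" and e2: "S \<inter> T = U \<inter> V" using v by (auto simp: valid_def)
  show s1: "S = (S - V) \<union> (S - U) \<union> (S \<inter> T)" using e1 e2 by blast
  show s2: "U = (S - V) \<union> (T - V) \<union> (S \<inter> T)" using e1 e2 by blast
  show s3: "T = (T - V) \<union> (T - U) \<union> (S \<inter> T)" using e1 e2 by blast
  show "V = (S - U) \<union> (T - U) \<union> (S \<inter> T)" using e1 e2 by blast
  have d1: "(S - V) \<inter> (S - U) = {}" "(S - V) \<inter> (T - V) = {}" "(T - V) \<inter> (T - U) = {}"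
    "((S - V) \<union> (S - U)) \<inter> (S \<inter> T) = {}" "((S - V) \<union> (T - V)) \<inter> (S \<inter> T) = {}"
    "((T - V) \<union> (T - U)) \<inter> (S \<inter> T) = {}"
    using e1 e2 by blast+
  have cS: "card S = card (S - V) + card (S - U) + card (S \<inter> T)"
    using s1 d1 f by (metis card_Un_disjoint finite_Diff finite_Int finite_Un)
  have fU: "finite U" using e1 f by (metis finite_Un)
  have cU: "card U = card (S - V) + card (T - V) + card (S \<inter> T)"
    using s2 d1 f by (metis card_Un_disjoint finite_Diff finite_Int finite_Un)
  have cT: "card T = card (T - V) + card (T - U) + card (S \<inter> T)"
    using s3 d1 f by (metis card_Un_disjoint finite_Diff finite_Int finite_Un)
  have "card U = a" using v by (simp add: valid_def)
  then show "card (S - U) = card (T - V)" using cS cU c by linarith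
  show "a = card (S - V) + card (S - U) + card (S \<inter> T)" using cS c by simp
  show "b = card (T - V) + card (T - U) + card (S \<inter> T)" using cT c by simp
qed

lemma phi_char:
  assumes h: "S1 \<union> A = U" "S2 \<union> B = V" "card S1 = a - k" "card S2 = k" "card A = k" "card B = b - k"
    "S1 \<union> S2 = S" "A \<union> B = T"
    and d: "S1 \<inter> A = {}" "S2 \<inter> B = {}" "S1 \<inter> S2 = {}" "A \<inter> B = {}"
    and f: "finite S" "finite T" and c: "card S = a" "card T = b" and kb: "k \<le> b" "b \<le> a"
  shows "valid a b S T U V \<and> card (S - U) \<le> k \<and>
    (S1, A, S2, B) = ((S - V) \<union> (S \<inter> T - S2 \<inter> A), (T - V) \<union> (S2 \<inter> A), (S - U) \<union> (S2 \<inter> A), (T - U) \<union> (S \<inter> T - S2 \<inter> A))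
    \<and> S2 \<inter> A \<subseteq> S \<inter> T \<and> card (S2 \<inter> A) = k - card (S - U)"
proof -
  have fs: "finite S1" "finite S2" "finite A" "finite B" using h f by auto
  have "card U = card S1 + card A" unfolding h(1)[symmetric]
    by (rule card_Un_disjoint) (use fs d in auto)
  then have cU: "card U = a" using h kb by simp
  have "card V = card S2 + card B" unfolding h(2)[symmetric]
    by (rule card_Un_disjoint) (use fs d in auto)
  then have cV: "card V = b" using h kb by simp
  have v: "valid a b S T U V" unfolding valid_def using h d cU cV by blast
  have e: "S2 = (S - U) \<union> (S2 \<inter> A)" using h d by blast
  have "card S2 = card (S - U) + card (S2 \<inter> A)"
    by (subst e, rule card_Un_disjoint) (use fs f h d in auto)
  then have "card (S - U) \<le> k \<and> card (S2 \<inter> A) = k - card (S - U)" using h by simp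
  moreover have "(S1, A, S2, B) = ((S - V) \<union> (S \<inter> T - S2 \<inter> A), (T - V) \<union> (S2 \<inter> A), (S - U) \<union> (S2 \<inter> A), (T - U) \<union> (S \<inter> T - S2 \<inter> A))"
    using h d by blast
  moreover have "S2 \<inter> A \<subseteq> S \<inter> T" using h by blast
  ultimately show ?thesis using v by blast
qed

lemma sign4:
  assumes "n1 + n2 + n3 + n4 = E + 2 * K"
  shows "(-1::'a::ring_1) ^ n1 * (-1) ^ n2 * (-1) ^ n3 * (-1) ^ n4 = (-1) ^ E"
proof -
  have "(-1::'a) ^ n1 * (-1) ^ n2 * (-1) ^ n3 * (-1) ^ n4 = (-1) ^ (n1 + n2 + n3 + n4)"
    by (simp add: power_add)
  also have "\<dots> = (-1) ^ (E + 2 * K)" using assms by simp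
  also have "\<dots> = (-1) ^ E" by (simp add: power_add power_mult)
  finally show ?thesis .
qed

lemma phi_sets:
  assumes e1: "S \<union> T = U \<union> V" and e2: "S \<inter> T = U \<inter> V" and z: "Z' \<subseteq> S \<inter> T"
  shows "(S - V) \<union> (S \<inter> T - Z') \<union> ((T - V) \<union> Z') = U"
    "(S - U) \<union> Z' \<union> ((T - U) \<union> (S \<inter> T - Z')) = V"
    "(S - V) \<union> (S \<inter> T - Z') \<union> ((S - U) \<union> Z') = S"
    "(T - V) \<union> Z' \<union> ((T - U) \<union> (S \<inter> T - Z')) = T"
  using e1 e2 z by (auto simp: set_eq_iff)

lemma phi_disj:
  assumes e1: "S \<union> T = U \<union> V" and e2: "S \<inter> T = U \<inter> V" and z: "Z' \<subseteq> S \<inter> T"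
  shows "(S - V) \<inter> (S - U) = {}" "(S - V) \<inter> (T - V) = {}" "(S - V) \<inter> (T - U) = {}" "(S - V) \<inter> (S \<inter> T - Z') = {}" "(S - V) \<inter> Z' = {}"
      "(S - U) \<inter> (T - V) = {}" "(S - U) \<inter> (T - U) = {}" "(S - U) \<inter> (S \<inter> T - Z') = {}" "(S - U) \<inter> Z' = {}"
      "(T - V) \<inter> (T - U) = {}" "(T - V) \<inter> (S \<inter> T - Z') = {}" "(T - V) \<inter> Z' = {}"
      "(T - U) \<inter> (S \<inter> T - Z') = {}" "(T - U) \<inter> Z' = {}" "(S \<inter> T - Z') \<inter> Z' = {}"
  using e1 e2 z by (auto simp: set_eq_iff)

lemma phi_img:
  assumes v: "valid a b S T U V" and f: "finite S" "finite T" and c: "card S = a" "card T = b"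
    and kb: "k \<le> b" "b \<le> a" and m: "card (S - U) \<le> k"
    and z: "Z' \<subseteq> S \<inter> T" "card Z' = k - card (S - U)"
  shows "(S - V) \<union> (S \<inter> T - Z') \<union> ((T - V) \<union> Z') = U \<and> (S - U) \<union> Z' \<union> ((T - U) \<union> (S \<inter> T - Z')) = V
    \<and> card ((S - V) \<union> (S \<inter> T - Z')) = a - k \<and> card ((S - U) \<union> Z') = k \<and> card ((T - V) \<union> Z') = k
    \<and> card ((T - U) \<union> (S \<inter> T - Z')) = b - k
    \<and> (S - V) \<union> (S \<inter> T - Z') \<union> ((S - U) \<union> Z') = S \<and> (T - V) \<union> Z' \<union> ((T - U) \<union> (S \<inter> T - Z')) = T
    \<and> wsgn ((S - V) \<union> (S \<inter> T - Z')) ((T - V) \<union> Z') * wsgn ((S - U) \<union> Z') ((T - U) \<union> (S \<inter> T - Z'))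
      * wsgn ((S - V) \<union> (S \<inter> T - Z')) ((S - U) \<union> Z') * wsgn ((T - V) \<union> Z') ((T - U) \<union> (S \<inter> T - Z'))
      = (epsv S T U V :: 'a::field)"
proof -
  note vf = valid_facts[OF v f c]
  have e1: "S \<union> T = U \<union> V" and e2: "S \<inter> T = U \<inter> V" using v by (auto simp: valid_def)
  let ?R = "S - V" and ?X = "S - U" and ?Y = "T - V" and ?Q = "T - U" and ?Z0 = "S \<inter> T - Z'"
  have fin: "finite ?R" "finite ?X" "finite ?Y" "finite ?Q" "finite ?Z0" "finite Z'"
    using f z(1) by (auto intro: finite_subset)
  have d: "?R \<inter> ?X = {}" "?R \<inter> ?Y = {}" "?R \<inter> ?Q = {}" "?R \<inter> ?Z0 = {}" "?R \<inter> Z' = {}"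
      "?X \<inter> ?Y = {}" "?X \<inter> ?Q = {}" "?X \<inter> ?Z0 = {}" "?X \<inter> Z' = {}"
      "?Y \<inter> ?Q = {}" "?Y \<inter> ?Z0 = {}" "?Y \<inter> Z' = {}"
      "?Q \<inter> ?Z0 = {}" "?Q \<inter> Z' = {}" "?Z0 \<inter> Z' = {}"
    by (fact phi_disj[OF e1 e2 z(1)])+
  have cZ0: "card ?Z0 = card (S \<inter> T) - (k - card (S - U))"
  proof -
    have "finite Z'" using z f by (meson finite_Int finite_subset)
    then show ?thesis using z by (simp add: card_Diff_subset)
  qed
  have kz: "k - card (S - U) \<le> card (S \<inter> T)" using z f by (metis card_mono finite_Int)
  have c1: "card (?R \<union> ?Z0) = a - k"
    using card_Un_disjoint[OF fin(1) fin(5) d(4)] vf(6) cZ0 kz m by linarith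
  have c2: "card (?X \<union> Z') = k"
    using card_Un_disjoint[OF fin(2) fin(6) d(9)] z m by linarith
  have c3: "card (?Y \<union> Z') = k"
    using card_Un_disjoint[OF fin(3) fin(6) d(12)] z m vf(5) by linarith
  have c4: "card (?Q \<union> ?Z0) = b - k"
    using card_Un_disjoint[OF fin(4) fin(5) d(13)] vf(7) vf(5) cZ0 kz m kb by linarith
  have sets: "?R \<union> ?Z0 \<union> (?Y \<union> Z') = U" "?X \<union> Z' \<union> (?Q \<union> ?Z0) = V"
    "?R \<union> ?Z0 \<union> (?X \<union> Z') = S" "?Y \<union> Z' \<union> (?Q \<union> ?Z0) = T"
    by (fact phi_sets[OF e1 e2 z(1)])+
  have ex: "ninv (?R \<union> ?Z0) (?Y \<union> Z') + ninv (?X \<union> Z') (?Q \<union> ?Z0) + ninv (?R \<union> ?Z0) (?X \<union> Z')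
     + ninv (?Y \<union> Z') (?Q \<union> ?Z0) = (ninv ?R ?Y + ninv ?X ?Q + ninv ?R ?X + ninv ?Y ?Q)
     + 2 * (ninv ?R Z' + ninv ?Z0 Z' + ninv Z' ?Q + ninv Z' ?Z0 + card ?X * card ?Z0)"
    by (rule phi_exp[OF fin d vf(5)])
  have dd: "(?R \<union> ?Z0) \<inter> (?Y \<union> Z') = {}" "(?X \<union> Z') \<inter> (?Q \<union> ?Z0) = {}"
     "(?R \<union> ?Z0) \<inter> (?X \<union> Z') = {}" "(?Y \<union> Z') \<inter> (?Q \<union> ?Z0) = {}"
    using d by (auto simp: set_eq_iff)
  have sg: "wsgn (?R \<union> ?Z0) (?Y \<union> Z') * wsgn (?X \<union> Z') (?Q \<union> ?Z0)
      * wsgn (?R \<union> ?Z0) (?X \<union> Z') * wsgn (?Y \<union> Z') (?Q \<union> ?Z0) = (epsv S T U V :: 'a)"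
    unfolding wsgn_eq epsv_def
    by (simp only: dd if_True simp_thms) (rule sign4[OF ex])
  show ?thesis using c1 c2 c3 c4 sets sg by (intro conjI) assumption+
qed

lemma wsgn_nz: "wsgn S T \<noteq> 0 \<Longrightarrow> S \<inter> T = {}"
  by (auto simp: wsgn_eq split: if_splits)

lemma cphi_val:
  assumes f: "S \<subseteq> {..<n}" "T \<subseteq> {..<n}" and c: "card S = a" "card T = b" and kb: "k \<le> b" "b \<le> a"
  shows "cphi n a b k S T U V = (if valid a b S T U V \<and> card (S - U) \<le> k
      then epsv S T U V * of_nat (card (S \<inter> T) choose (k - card (S - U))) else (0::'a::field))"
proof -
  let ?P = "Pow {..<n}"
  define F where "F = (\<lambda>(S1, A, S2, B). if S1 \<union> A = U \<and> S2 \<union> B = V \<and> card S1 = a - k \<and> card S2 = k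
        \<and> card A = k \<and> card B = b - k \<and> S1 \<union> S2 = S \<and> A \<union> B = T
     then wsgn S1 A * wsgn S2 B * wsgn S1 S2 * wsgn A B else (0::'a))"
  define g where "g = (\<lambda>Z'. ((S - V) \<union> (S \<inter> T - Z'), (T - V) \<union> Z', (S - U) \<union> Z', (T - U) \<union> (S \<inter> T - Z')))"
  define Zs where "Zs = {Z'. Z' \<subseteq> S \<inter> T \<and> card Z' = k - card (S - U)}"
  have 1: "cphi n a b k S T U V = sum F (?P \<times> ?P \<times> ?P \<times> ?P)"
    unfolding cphi_def F_def sum.cartesian_product by simp
  have fS: "finite S" "finite T" using f finite_subset by auto
  have nz: "valid a b S T U V \<and> card (S - U) \<le> k \<and> p \<in> g ` Zs" if "F p \<noteq> 0" for p
  proof -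
    obtain S1 A S2 B where p: "p = (S1, A, S2, B)" by (cases p) auto
    have h: "S1 \<union> A = U" "S2 \<union> B = V" "card S1 = a - k" "card S2 = k" "card A = k" "card B = b - k"
      "S1 \<union> S2 = S" "A \<union> B = T" and w: "wsgn S1 A * wsgn S2 B * wsgn S1 S2 * wsgn A B \<noteq> (0::'a)"
      using that unfolding p F_def by (auto split: if_splits)
    have d: "S1 \<inter> A = {}" "S2 \<inter> B = {}" "S1 \<inter> S2 = {}" "A \<inter> B = {}"
      using w wsgn_nz by (metis mult_zero_left mult_zero_right)+
    note pc = phi_char[OF h d fS c kb]
    have "p = g (S2 \<inter> A)" using pc p g_def by simp
    moreover have "S2 \<inter> A \<in> Zs" using pc Zs_def by simp
    ultimately show ?thesis using pc by blast
  qed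
  show ?thesis
  proof (cases "valid a b S T U V \<and> card (S - U) \<le> k")
    case True
    then have v: "valid a b S T U V" and m: "card (S - U) \<le> k" by auto
    have e2: "S \<inter> T = U \<inter> V" using v by (simp add: valid_def)
    have img: "F (g Z') = epsv S T U V" if "Z' \<in> Zs" for Z'
    proof -
      have z: "Z' \<subseteq> S \<inter> T" "card Z' = k - card (S - U)" using that Zs_def by auto
      note pi = phi_img[OF v fS c kb m z, where 'a='a]
      show ?thesis unfolding g_def F_def using pi by (simp only: prod.case if_True simp_thms)
    qed
    have sub: "g ` Zs \<subseteq> ?P \<times> ?P \<times> ?P \<times> ?P" using f unfolding g_def Zs_def by auto
    have inj: "inj_on g Zs"
    proof (rule inj_onI)
      fix Z1 Z2 assume "Z1 \<in> Zs" "Z2 \<in> Zs" "g Z1 = g Z2"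
      then have "(T - V) \<union> Z1 = (T - V) \<union> Z2" "Z1 \<subseteq> S \<inter> T" "Z2 \<subseteq> S \<inter> T"
        unfolding g_def Zs_def by auto
      then show "Z1 = Z2" using e2 by blast
    qed
    have "sum F (?P \<times> ?P \<times> ?P \<times> ?P) = sum F (g ` Zs)"
      by (rule sum.mono_neutral_right) (use sub nz in blast)+
    also have "\<dots> = sum (F \<circ> g) Zs" by (rule sum.reindex[OF inj])
    also have "\<dots> = sum (\<lambda>_. epsv S T U V) Zs" by (rule sum.cong) (use img in auto)
    also have "\<dots> = of_nat (card Zs) * epsv S T U V" by simp
    also have "card Zs = card (S \<inter> T) choose (k - card (S - U))"
      unfolding Zs_def by (rule n_subsets) (use fS in auto)
    finally show ?thesis using 1 True by (simp add: mult.commute)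
  next
    case False
    have "sum F (?P \<times> ?P \<times> ?P \<times> ?P) = 0"
      by (rule sum.neutral) (use nz False in blast)
    then show ?thesis unfolding if_not_P[OF False] using 1 by simp
  qed
qed

lemma Phi_char_sets:
  assumes "A' \<union> W = V" "S \<union> A = U \<union> A'" "A \<union> W = T" "A' \<inter> W = {}" "U \<inter> A' = {}" "S \<inter> A = {}" "A \<inter> W = {}"
  shows "S \<union> T = U \<union> V" "S \<inter> T = U \<inter> V" "A' = (S - U) \<union> (A' \<inter> (T - U))"
    "W = (T - U - A' \<inter> (T - U)) \<union> (S \<inter> T)" "A = (T - V) \<union> (A' \<inter> (T - U))"
    "(S - U) \<inter> (A' \<inter> (T - U)) = {}" "A' \<inter> (T - U) \<subseteq> T - U"
  using assms by (auto simp: set_eq_iff) (blast+)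

lemma Phi_img_sets:
  assumes e1: "S \<union> T = U \<union> V" and e2: "S \<inter> T = U \<inter> V" and z: "Q1 \<subseteq> T - U"
  shows "(S - U) \<union> Q1 \<union> ((T - U - Q1) \<union> (S \<inter> T)) = V"
    "S \<union> ((T - V) \<union> Q1) = U \<union> ((S - U) \<union> Q1)"
    "(T - V) \<union> Q1 \<union> ((T - U - Q1) \<union> (S \<inter> T)) = T"
    "(T - U - Q1) \<union> Q1 = T - U"
  using e1 e2 z by (auto simp: set_eq_iff)

lemma Phi_img_disj:
  assumes e1: "S \<union> T = U \<union> V" and e2: "S \<inter> T = U \<inter> V" and z: "Q1 \<subseteq> T - U"
  shows "(S - V) \<inter> (S - U) = {}" "(S - V) \<inter> (T - V) = {}" "(S - V) \<inter> (T - U - Q1) = {}" "(S - V) \<inter> Q1 = {}" "(S - V) \<inter> (S \<inter> T) = {}"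
      "(S - U) \<inter> (T - V) = {}" "(S - U) \<inter> (T - U - Q1) = {}" "(S - U) \<inter> Q1 = {}" "(S - U) \<inter> (S \<inter> T) = {}"
      "(T - V) \<inter> (T - U - Q1) = {}" "(T - V) \<inter> Q1 = {}" "(T - V) \<inter> (S \<inter> T) = {}"
      "(T - U - Q1) \<inter> Q1 = {}" "(T - U - Q1) \<inter> (S \<inter> T) = {}" "Q1 \<inter> (S \<inter> T) = {}"
      "((S - U) \<union> Q1) \<inter> ((T - U - Q1) \<union> (S \<inter> T)) = {}" "U \<inter> ((S - U) \<union> Q1) = {}"
      "S \<inter> ((T - V) \<union> Q1) = {}" "((T - V) \<union> Q1) \<inter> ((T - U - Q1) \<union> (S \<inter> T)) = {}"
  using e1 e2 z by (auto simp: set_eq_iff)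

lemma sign4':
  assumes "n1 + n2 + n3 + n4 = E + m * m + 2 * K"
  shows "(-1::'a::ring_1) ^ n1 * (-1) ^ n2 * (-1) ^ n3 * (-1) ^ n4 = (-1) ^ m * (-1) ^ E"
proof -
  have "(-1::'a) ^ n1 * (-1) ^ n2 * (-1) ^ n3 * (-1) ^ n4 = (-1) ^ (n1 + n2 + n3 + n4)"
    by (simp add: power_add)
  also have "\<dots> = (-1) ^ (E + m * m + 2 * K)" using assms by simp
  also have "\<dots> = (-1) ^ m * (-1) ^ E" by (simp add: power_add power_mult minus_one_power_iff)
  finally show ?thesis .
qed

lemma Phi_img:
  assumes v: "valid a b S T U V" and f: "finite S" "finite T" and c: "card S = a" "card T = b"
    and tb: "t \<le> b" and m: "card (S - U) \<le> t"
    and z: "Q1 \<subseteq> T - U" "card Q1 = t - card (S - U)"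
  shows "(S - U) \<union> Q1 \<union> ((T - U - Q1) \<union> (S \<inter> T)) = V \<and> card U = a \<and> card ((S - U) \<union> Q1) = t
    \<and> S \<union> ((T - V) \<union> Q1) = U \<union> ((S - U) \<union> Q1) \<and> card ((T - V) \<union> Q1) = t
    \<and> card ((T - U - Q1) \<union> (S \<inter> T)) = b - t \<and> (T - V) \<union> Q1 \<union> ((T - U - Q1) \<union> (S \<inter> T)) = T
    \<and> wsgn ((S - U) \<union> Q1) ((T - U - Q1) \<union> (S \<inter> T)) * wsgn U ((S - U) \<union> Q1)
      * wsgn S ((T - V) \<union> Q1) * wsgn ((T - V) \<union> Q1) ((T - U - Q1) \<union> (S \<inter> T))
      = (-1) ^ card (S - U) * (epsv S T U V :: 'a::field)"
proof -
  note vf = valid_facts[OF v f c]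
  have e1: "S \<union> T = U \<union> V" and e2: "S \<inter> T = U \<inter> V" and cU: "card U = a" using v by (auto simp: valid_def)
  let ?R = "S - V" and ?X = "S - U" and ?Y = "T - V" and ?Q0 = "T - U - Q1" and ?Z = "S \<inter> T"
  have fin: "finite ?R" "finite ?X" "finite ?Y" "finite ?Q0" "finite Q1" "finite ?Z"
    using f z(1) by (auto intro: finite_subset)
  note d = Phi_img_disj[OF e1 e2 z(1)]
  note st = Phi_img_sets[OF e1 e2 z(1)]
  have cQ0: "card ?Q0 = card (T - U) - (t - card (S - U))"
    using z fin(5) by (simp add: card_Diff_subset)
  have kz: "t - card (S - U) \<le> card (T - U)" using z f by (metis card_mono finite_Diff)
  have c1: "card (?X \<union> Q1) = t"
    using card_Un_disjoint[OF fin(2) fin(5) d(8)] z m by linarith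
  have c2: "card (?Y \<union> Q1) = t"
    using card_Un_disjoint[OF fin(3) fin(5) d(11)] z m vf(5) by linarith
  have c3: "card (?Q0 \<union> ?Z) = b - t"
    using card_Un_disjoint[OF fin(4) fin(6) d(14)] vf(7) vf(5) cQ0 kz m tb by linarith
  have ex: "ninv (?X \<union> Q1) (?Q0 \<union> ?Z) + ninv (?R \<union> ?Y \<union> ?Z) (?X \<union> Q1) + ninv (?R \<union> ?X \<union> ?Z) (?Y \<union> Q1)
     + ninv (?Y \<union> Q1) (?Q0 \<union> ?Z) = (ninv ?R ?Y + ninv ?X (?Q0 \<union> Q1) + ninv ?R ?X + ninv ?Y (?Q0 \<union> Q1))
     + card ?X * card ?X + 2 * (ninv Q1 ?Q0 + ninv Q1 ?Z + ninv ?R Q1 + ninv ?Z Q1 + card ?X * card ?Z)"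
    by (rule Phi_exp[OF fin d(1-15) vf(5)])
  have ex2: "ninv (?X \<union> Q1) (?Q0 \<union> ?Z) + ninv U (?X \<union> Q1) + ninv S (?Y \<union> Q1)
     + ninv (?Y \<union> Q1) (?Q0 \<union> ?Z) = (ninv ?R ?Y + ninv ?X (T - U) + ninv ?R ?X + ninv ?Y (T - U))
     + card ?X * card ?X + 2 * (ninv Q1 ?Q0 + ninv Q1 ?Z + ninv ?R Q1 + ninv ?Z Q1 + card ?X * card ?Z)"
    using ex unfolding vf(2)[symmetric] vf(1)[symmetric] st(4) .
  have sg: "wsgn (?X \<union> Q1) (?Q0 \<union> ?Z) * wsgn U (?X \<union> Q1) * wsgn S (?Y \<union> Q1) * wsgn (?Y \<union> Q1) (?Q0 \<union> ?Z)
      = (-1) ^ card (S - U) * (epsv S T U V :: 'a)"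
    unfolding wsgn_eq epsv_def
    by (simp only: d(16-19) if_True simp_thms) (rule sign4'[OF ex2])
  show ?thesis using st cU c1 c2 c3 sg by (intro conjI) assumption+
qed

lemma Phi_char:
  assumes h: "A' \<union> W = V" "card U = a" "card A' = t" "S \<union> A = U \<union> A'" "card A = t" "card W = b - t" "A \<union> W = T"
    and d: "A' \<inter> W = {}" "U \<inter> A' = {}" "S \<inter> A = {}" "A \<inter> W = {}"
    and f: "finite S" "finite T" and c: "card S = a" "card T = b" and tb: "t \<le> b"
  shows "valid a b S T U V \<and> card (S - U) \<le> t \<and>
    (A', W, A) = ((S - U) \<union> (A' \<inter> (T - U)), (T - U - A' \<inter> (T - U)) \<union> (S \<inter> T), (T - V) \<union> (A' \<inter> (T - U)))
    \<and> A' \<inter> (T - U) \<subseteq> T - U \<and> card (A' \<inter> (T - U)) = t - card (S - U)"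
proof -
  note cs = Phi_char_sets[OF h(1) h(4) h(7) d]
  have fA: "finite A" "finite W" using h(7) f by (metis finite_Un)+
  have "A' \<subseteq> S \<union> A" using h(4) by blast
  then have fA': "finite A'" using f fA by (meson finite_Un finite_subset)
  have "card V = card A' + card W" unfolding h(1)[symmetric]
    by (rule card_Un_disjoint) (use fA fA' d in auto)
  then have cV: "card V = b" using h tb by simp
  have v: "valid a b S T U V" unfolding valid_def using cs(1,2) h(2) cV by blast
  have "card A' = card (S - U) + card (A' \<inter> (T - U))"
    by (subst cs(3), rule card_Un_disjoint) (use fA' f cs(6) in auto)
  then have "card (S - U) \<le> t \<and> card (A' \<inter> (T - U)) = t - card (S - U)" using h by simp
  moreover have "(A', W, A) = ((S - U) \<union> (A' \<inter> (T - U)), (T - U - A' \<inter> (T - U)) \<union> (S \<inter> T), (T - V) \<union> (A' \<inter> (T - U)))"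
    using cs(3-5) by simp
  ultimately show ?thesis using v cs(7) by blast
qed

lemma cPhi_val:
  assumes f: "S \<subseteq> {..<n}" "T \<subseteq> {..<n}" and c: "card S = a" "card T = b" and tb: "t \<le> b"
  shows "cPhi n a b t S T U V = (if valid a b S T U V \<and> card (S - U) \<le> t
      then (-1) ^ card (S - U) * epsv S T U V * of_nat (card (T - U) choose (t - card (S - U))) else (0::'a::field))"
proof -
  let ?P = "Pow {..<n}"
  define F where "F = (\<lambda>(A', W, A). if A' \<union> W = V \<and> card U = a \<and> card A' = t \<and> S \<union> A = U \<union> A' \<and> card A = t
        \<and> card W = b - t \<and> A \<union> W = T
     then wsgn A' W * wsgn U A' * wsgn S A * wsgn A W else (0::'a))"
  define g where "g = (\<lambda>Q1. ((S - U) \<union> Q1, (T - U - Q1) \<union> (S \<inter> T), (T - V) \<union> Q1))"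
  define Zs where "Zs = {Q1. Q1 \<subseteq> T - U \<and> card Q1 = t - card (S - U)}"
  have 1: "cPhi n a b t S T U V = sum F (?P \<times> ?P \<times> ?P)"
    unfolding cPhi_def F_def sum.cartesian_product by simp
  have fS: "finite S" "finite T" using f finite_subset by auto
  have nz: "valid a b S T U V \<and> card (S - U) \<le> t \<and> p \<in> g ` Zs" if "F p \<noteq> 0" for p
  proof -
    obtain A' W A where p: "p = (A', W, A)" by (cases p) auto
    have h: "A' \<union> W = V" "card U = a" "card A' = t" "S \<union> A = U \<union> A'" "card A = t" "card W = b - t" "A \<union> W = T"
      and w: "wsgn A' W * wsgn U A' * wsgn S A * wsgn A W \<noteq> (0::'a)"
      using that unfolding p F_def by (auto split: if_splits)
    have d: "A' \<inter> W = {}" "U \<inter> A' = {}" "S \<inter> A = {}" "A \<inter> W = {}"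
      using w wsgn_nz by (metis mult_zero_left mult_zero_right)+
    note pc = Phi_char[OF h d fS c tb]
    have "p = g (A' \<inter> (T - U))" using pc p g_def by simp
    moreover have "A' \<inter> (T - U) \<in> Zs" using pc Zs_def by simp
    ultimately show ?thesis using pc by blast
  qed
  show ?thesis
  proof (cases "valid a b S T U V \<and> card (S - U) \<le> t")
    case True
    then have v: "valid a b S T U V" and m: "card (S - U) \<le> t" by auto
    have img: "F (g Q1) = (-1) ^ card (S - U) * epsv S T U V" if "Q1 \<in> Zs" for Q1
    proof -
      have z: "Q1 \<subseteq> T - U" "card Q1 = t - card (S - U)" using that Zs_def by auto
      note pi = Phi_img[OF v fS c tb m z, where 'a='a]
      show ?thesis unfolding g_def F_def using pi by (simp only: prod.case if_True simp_thms)
    qed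
    have sub: "g ` Zs \<subseteq> ?P \<times> ?P \<times> ?P" using f unfolding g_def Zs_def by auto
    have inj: "inj_on g Zs"
    proof (rule inj_onI)
      fix Z1 Z2 assume "Z1 \<in> Zs" "Z2 \<in> Zs" "g Z1 = g Z2"
      then have "(S - U) \<union> Z1 = (S - U) \<union> Z2" "Z1 \<subseteq> T - U" "Z2 \<subseteq> T - U"
        unfolding g_def Zs_def by auto
      moreover have "S \<inter> T = U \<inter> V" using v by (simp add: valid_def)
      ultimately show "Z1 = Z2" by blast
    qed
    have "sum F (?P \<times> ?P \<times> ?P) = sum F (g ` Zs)"
      by (rule sum.mono_neutral_right) (use sub nz in blast)+
    also have "\<dots> = sum (F \<circ> g) Zs" by (rule sum.reindex[OF inj])
    also have "\<dots> = sum (\<lambda>_. (-1) ^ card (S - U) * epsv S T U V) Zs" by (rule sum.cong) (use img in auto)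
    also have "\<dots> = of_nat (card Zs) * ((-1) ^ card (S - U) * epsv S T U V)" by simp
    also have "card Zs = card (T - U) choose (t - card (S - U))"
      unfolding Zs_def by (rule n_subsets) (use fS in auto)
    finally show ?thesis using 1 True by (simp add: mult.commute)
  next
    case False
    have "sum F (?P \<times> ?P \<times> ?P) = 0"
      by (rule sum.neutral) (use nz False in blast)
    then show ?thesis unfolding if_not_P[OF False] using 1 by simp
  qed
qed

lemma coef_id:
  assumes mk: "m \<le> k" and b: "b = m + q + z"
  shows "(\<Sum>t=0..k. (-1)^t * of_nat ((b-t) choose (k-t)) *
           (if m \<le> t then (-1) ^ m * e * of_nat (q choose (t - m)) else 0))
       = e * of_nat (z choose (k - m)) * (1::'a::comm_ring_1)"
proof -
  let ?F = "\<lambda>t. (-1)^t * of_nat ((b-t) choose (k-t)) *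
           (if m \<le> t then (-1) ^ m * e * of_nat (q choose (t - m)) else (0::'a))"
  have "(\<Sum>t=0..k. ?F t) = (\<Sum>t=m..k. ?F t)"
    by (rule sum.mono_neutral_right) auto
  also have "\<dots> = (\<Sum>s=0..k-m. ?F (s + m))"
  proof -
    have "{m..k} = {0 + m..k - m + m}" using mk by simp
    then show ?thesis by (simp only: sum.shift_bounds_cl_nat_ivl)
  qed
  also have "\<dots> = (\<Sum>s=0..k-m. e * ((-1)^s * of_nat (q choose s) * of_nat ((q+z-s) choose ((k-m)-s))))"
  proof (rule sum.cong[OF refl])
    fix s assume "s \<in> {0..k-m}"
    have e1: "b - (s + m) = q + z - s" using b by simp
    have e2: "k - (s + m) = k - m - s" by simp
    have e3: "(-1::'a) ^ (s + m) * (-1) ^ m = (-1) ^ s"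
      by (simp add: power_add mult.assoc power_mult_distrib[symmetric])
    have "?F (s + m) = ((-1) ^ (s + m) * (-1) ^ m) * e * of_nat (q choose s) * of_nat ((q+z-s) choose ((k-m)-s))"
      unfolding e1 e2 by (simp add: ac_simps)
    also have "\<dots> = e * ((-1)^s * of_nat (q choose s) * of_nat ((q+z-s) choose ((k-m)-s)))"
      unfolding e3 by (simp add: ac_simps)
    finally show "?F (s + m) = e * ((-1)^s * of_nat (q choose s) * of_nat ((q+z-s) choose ((k-m)-s)))" .
  qed
  also have "\<dots> = e * of_nat (z choose (k - m))"
    by (simp only: sum_distrib_left[symmetric] binom_alt)
  finally show ?thesis by simp
qed

lemma swap3: "(\<Sum>s\<in>M. \<Sum>t\<in>N. \<Sum>i\<in>I. f s t i) = (\<Sum>i\<in>I. \<Sum>s\<in>M. \<Sum>t\<in>N. f s t i)"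
proof -
  have "(\<Sum>s\<in>M. \<Sum>t\<in>N. \<Sum>i\<in>I. f s t i) = (\<Sum>s\<in>M. \<Sum>i\<in>I. \<Sum>t\<in>N. f s t i)"
    by (rule sum.cong[OF refl], rule sum.swap)
  also have "\<dots> = (\<Sum>i\<in>I. \<Sum>s\<in>M. \<Sum>t\<in>N. f s t i)" by (rule sum.swap)
  finally show ?thesis .
qed

lemma coef_main:
  assumes f: "S \<subseteq> {..<n}" "T \<subseteq> {..<n}" and c: "card S = a" "card T = b" and kb: "k \<le> b" "b \<le> a"
  shows "cphi n a b k S T U V = (\<Sum>t=0..k. (-1)^t * of_nat ((b-t) choose (k-t)) * (cPhi n a b t S T U V :: 'a::field))"
proof -
  have fS: "finite S" "finite T" using f finite_subset by auto
  let ?m = "card (S - U)" and ?q = "card (T - U)" and ?z = "card (S \<inter> T)"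
  have cP: "cPhi n a b t S T U V = (if valid a b S T U V \<and> ?m \<le> t
      then (-1) ^ ?m * epsv S T U V * of_nat (?q choose (t - ?m)) else (0::'a))" if "t \<in> {0..k}" for t
    using cPhi_val[OF f c, of t U V] that kb by simp
  have cp: "cphi n a b k S T U V = (if valid a b S T U V \<and> ?m \<le> k
      then epsv S T U V * of_nat (?z choose (k - ?m)) else (0::'a))"
    by (rule cphi_val[OF f c kb])
  show ?thesis
  proof (cases "valid a b S T U V")
    case True
    note vf = valid_facts[OF True fS c]
    have bq: "b = ?m + ?q + ?z" using vf(5) vf(7) by simp
    show ?thesis
    proof (cases "?m \<le> k")
      case True2: True
      have "(\<Sum>t=0..k. (-1)^t * of_nat ((b-t) choose (k-t)) * (cPhi n a b t S T U V :: 'a))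
         = (\<Sum>t=0..k. (-1)^t * of_nat ((b-t) choose (k-t)) *
           (if ?m \<le> t then (-1) ^ ?m * epsv S T U V * of_nat (?q choose (t - ?m)) else 0))"
        by (rule sum.cong[OF refl]) (simp add: cP True)
      also have "\<dots> = epsv S T U V * of_nat (?z choose (k - ?m)) * 1"
        by (rule coef_id[OF True2 bq])
      finally show ?thesis using cp True True2 by simp
    next
      case False
      have "(\<Sum>t=0..k. (-1)^t * of_nat ((b-t) choose (k-t)) * (cPhi n a b t S T U V :: 'a)) = 0"
        by (rule sum.neutral) (use cP False in auto)
      then show ?thesis using cp False by simp
    qed
  next
    case False
    have "(\<Sum>t=0..k. (-1)^t * of_nat ((b-t) choose (k-t)) * (cPhi n a b t S T U V :: 'a)) = 0"
      by (rule sum.neutral) (use cP False in auto)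
    then show ?thesis using cp False by simp
  qed
qed

lemma delta2':
  assumes "finite M" "finite N"
  shows "(\<Sum>S\<in>M. \<Sum>T\<in>N. if s = S \<and> t = T then f S T else 0) = (if s \<in> M \<and> t \<in> N then f s t else 0)"
proof -
  have "(\<Sum>S\<in>M. \<Sum>T\<in>N. if s = S \<and> t = T then f S T else 0)
     = (\<Sum>S\<in>M. if s = S then (\<Sum>T\<in>N. if t = T then f S T else 0) else 0)"
    by (intro sum.cong refl) (auto intro!: sum.cong)
  then show ?thesis using assms by (simp add: sum.delta')
qed

lemma Phi0:
  fixes x :: "nat set \<Rightarrow> nat set \<Rightarrow> 'a::field"
  assumes it: "in_tensor n a b x"
  shows "Phi n a b 0 x U V = x U V"
proof -
  let ?P = "Pow {..<n}"
  have it': "S \<subseteq> {..<n} \<and> T \<subseteq> {..<n} \<and> card S = a \<and> card T = b" if "x S T \<noteq> 0" for S T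
    using it that unfolding in_tensor_def by blast
  have trm: "x S T * cPhi n a b 0 S T U V = (if U = S \<and> V = T then x S T else 0)" for S T
  proof (cases "x S T = 0")
    case True then show ?thesis by simp
  next
    case False
    then have h: "S \<subseteq> {..<n}" "T \<subseteq> {..<n}" "card S = a" "card T = b" using it' by auto
    have fS: "finite S" "finite T" using h finite_subset by auto
    have cv: "cPhi n a b 0 S T U V = (if valid a b S T U V \<and> card (S - U) \<le> 0
      then (-1) ^ card (S - U) * epsv S T U V * of_nat (card (T - U) choose (0 - card (S - U))) else (0::'a))"
      by (rule cPhi_val[OF h]) simp
    show ?thesis
    proof (cases "valid a b S T U V \<and> card (S - U) \<le> 0")
      case True
      then have v: "valid a b S T U V" and m0: "card (S - U) = 0" by auto
      have e1: "S \<union> T = U \<union> V" and e2: "S \<inter> T = U \<inter> V" and cU: "card U = a" using v by (auto simp: valid_def)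
      have "S - U = {}" using m0 fS by simp
      then have "S \<subseteq> U" by blast
      moreover have "finite U" using e1 fS by (metis finite_Un)
      ultimately have SU: "S = U" using cU h(3) by (simp add: card_subset_eq)
      have TV: "T = V" using e1 e2 unfolding SU by blast
      have "epsv S T U V = (1::'a)" unfolding epsv_def SU TV by simp
      then show ?thesis using cv True SU TV by simp
    next
      case F2: False
      have nUS: "\<not> (U = S \<and> V = T)"
      proof
        assume "U = S \<and> V = T"
        then have "valid a b S T U V \<and> card (S - U) \<le> 0" using h by (auto simp: valid_def)
        then show False using F2 by blast
      qed
      have c0: "cPhi n a b 0 S T U V = (0::'a)" unfolding cv if_not_P[OF F2] ..
      show ?thesis unfolding c0 if_not_P[OF nUS] by simp
    qed
  qed
  have "Phi n a b 0 x U V = (\<Sum>S\<in>?P. \<Sum>T\<in>?P. if U = S \<and> V = T then x S T else 0)"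
    unfolding Phi_expand trm ..
  also have "\<dots> = (if U \<in> ?P \<and> V \<in> ?P then x U V else 0)" by (rule delta2') auto
  also have "\<dots> = x U V" using it'[of U V] by auto
  finally show ?thesis .
qed

theorem lemma4p3:
  fixes x :: "nat set \<Rightarrow> nat set \<Rightarrow> 'a::field_char_0"
    and n a b k :: nat
  assumes "0 < k" and "k \<le> b" and "b \<le> a"
    and "in_tensor n a b x"
  shows "(\<forall>U V. phi n a b k x U V =
            (\<Sum>t = 0..k. (-1) ^ t * of_nat ((b - t) choose (k - t)) * Phi n a b t x U V))
       \<and> (\<forall>U V. psi n a b k x U V =
            (\<Sum>t = 1..k. (-1) ^ (t - 1) * of_nat ((b - t) choose (k - t)) * Phi n a b t x U V))"
proof -
  let ?P = "Pow {..<n}"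
  let ?c = "\<lambda>t. (-1) ^ t * of_nat ((b - t) choose (k - t)) :: 'a"
  have it': "S \<subseteq> {..<n} \<and> T \<subseteq> {..<n} \<and> card S = a \<and> card T = b" if "x S T \<noteq> 0" for S T
    using assms(4) that unfolding in_tensor_def by blast
  have P1: "phi n a b k x U V = (\<Sum>t = 0..k. ?c t * Phi n a b t x U V)" for U V
  proof -
    have "phi n a b k x U V = (\<Sum>S\<in>?P. \<Sum>T\<in>?P. x S T * cphi n a b k S T U V)"
      by (rule phi_expand)
    also have "\<dots> = (\<Sum>S\<in>?P. \<Sum>T\<in>?P. x S T * (\<Sum>t=0..k. ?c t * cPhi n a b t S T U V))"
    proof (intro sum.cong refl)
      fix S T
      show "x S T * cphi n a b k S T U V = x S T * (\<Sum>t=0..k. ?c t * cPhi n a b t S T U V)"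
      proof (cases "x S T = 0")
        case False
        then have h: "S \<subseteq> {..<n}" "T \<subseteq> {..<n}" "card S = a" "card T = b" using it' by auto
        show ?thesis using coef_main[OF h assms(2,3), of U V, where 'a='a] by simp
      qed simp
    qed
    also have "\<dots> = (\<Sum>S\<in>?P. \<Sum>T\<in>?P. \<Sum>t=0..k. ?c t * (x S T * cPhi n a b t S T U V))"
      by (simp add: sum_distrib_left ac_simps)
    also have "\<dots> = (\<Sum>t=0..k. \<Sum>S\<in>?P. \<Sum>T\<in>?P. ?c t * (x S T * cPhi n a b t S T U V))"
      by (rule swap3)
    also have "\<dots> = (\<Sum>t = 0..k. ?c t * Phi n a b t x U V)"
      by (simp add: Phi_expand sum_distrib_left)
    finally show ?thesis .
  qed
  have P2: "psi n a b k x U V =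
     (\<Sum>t = 1..k. (-1) ^ (t - 1) * of_nat ((b - t) choose (k - t)) * Phi n a b t x U V)" for U V
  proof -
    have "(\<Sum>t = 0..k. ?c t * Phi n a b t x U V) = ?c 0 * Phi n a b 0 x U V + (\<Sum>t = Suc 0..k. ?c t * Phi n a b t x U V)"
      by (rule sum.atLeast_Suc_atMost) simp
    also have "?c 0 * Phi n a b 0 x U V = of_nat (b choose k) * x U V"
      using Phi0[OF assms(4)] by simp
    finally have e: "phi n a b k x U V = of_nat (b choose k) * x U V + (\<Sum>t = 1..k. ?c t * Phi n a b t x U V)"
      using P1 by simp
    have "(\<Sum>t = 1..k. (-1) ^ (t - 1) * of_nat ((b - t) choose (k - t)) * Phi n a b t x U V)
        = (\<Sum>t = 1..k. - (?c t * Phi n a b t x U V))"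
    proof (rule sum.cong[OF refl])
      fix t assume "t \<in> {1..k}"
      then obtain s where t: "t = Suc s" by (cases t) auto
      show "(-1) ^ (t - 1) * of_nat ((b - t) choose (k - t)) * Phi n a b t x U V = - (?c t * Phi n a b t x U V)"
        unfolding t by simp
    qed
    then show ?thesis unfolding psi_def e by (simp add: sum_negf)
  qed
  show ?thesis using P1 P2 by blast
qed

end
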